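(* Let $(X,Y)$ be a minimal divider of a matroid $N$. Then ${\rm cl}(X)\cap {\rm cl}(Y)={\rm cl}(X)\cap {\rm cl}(Y-{\rm cl}(X))$.
   Context: A partition $(X,Y)$ of $E(N)$ is a vertical $k$-separation if $r(X)+r(Y)-r(N)\leq k-1$ and $\min\{r(X),r(Y)\}\geq k$; it is exact if $r(X)+r(Y)-r(N)=k-1$. A divider of $N$ is an exact vertical $k$-separation for some $k$. A divider $(X,Y)$ is minimal if there is no vertical $k'$-separation $(X',Y')$ of $N$ (for any $k'$) with ${\rm cl}(X')\cap {\rm cl}(Y')\subsetneqq {\rm cl}(X)\cap {\rm cl}(Y)$. *)

theory Defs
  imports Main
begin

definition matroid_rank :: "'a set \<Rightarrow> ('a set \<Rightarrow> nat) \<Rightarrow> bool" where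
  "matroid_rank E r \<longleftrightarrow> finite E
     \<and> (\<forall>X. X \<subseteq> E \<longrightarrow> r X \<le> card X)
     \<and> (\<forall>X Y. X \<subseteq> Y \<and> Y \<subseteq> E \<longrightarrow> r X \<le> r Y)
     \<and> (\<forall>X Y. X \<subseteq> E \<and> Y \<subseteq> E \<longrightarrow> r (X \<union> Y) + r (X \<inter> Y) \<le> r X + r Y)"

definition mcl :: "'a set \<Rightarrow> ('a set \<Rightarrow> nat) \<Rightarrow> 'a set \<Rightarrow> 'a set" where
  "mcl E r X = {e \<in> E. r (insert e X) = r X}"

definition vertical_sep :: "'a set \<Rightarrow> ('a set \<Rightarrow> nat) \<Rightarrow> nat \<Rightarrow> 'a set \<Rightarrow> 'a set \<Rightarrow> bool" where
  "vertical_sep E r k X Y \<longleftrightarrow> X \<union> Y = E \<and> X \<inter> Y = {}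
     \<and> int (r X) + int (r Y) - int (r E) \<le> int k - 1
     \<and> min (r X) (r Y) \<ge> k"

definition exact_vertical_sep :: "'a set \<Rightarrow> ('a set \<Rightarrow> nat) \<Rightarrow> nat \<Rightarrow> 'a set \<Rightarrow> 'a set \<Rightarrow> bool" where
  "exact_vertical_sep E r k X Y \<longleftrightarrow> vertical_sep E r k X Y
     \<and> int (r X) + int (r Y) - int (r E) = int k - 1"

definition divider :: "'a set \<Rightarrow> ('a set \<Rightarrow> nat) \<Rightarrow> 'a set \<Rightarrow> 'a set \<Rightarrow> bool" where
  "divider E r X Y \<longleftrightarrow> (\<exists>k. exact_vertical_sep E r k X Y)"

definition minimal_divider :: "'a set \<Rightarrow> ('a set \<Rightarrow> nat) \<Rightarrow> 'a set \<Rightarrow> 'a set \<Rightarrow> bool" where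
  "minimal_divider E r X Y \<longleftrightarrow> divider E r X Y
     \<and> \<not> (\<exists>k' X' Y'. vertical_sep E r k' X' Y'
            \<and> mcl E r X' \<inter> mcl E r Y' \<subset> mcl E r X \<inter> mcl E r Y)"

end

theory Submission
  imports Defs
begin

lemma mr_mono: "matroid_rank E r \<Longrightarrow> A \<subseteq> B \<Longrightarrow> B \<subseteq> E \<Longrightarrow> r A \<le> r B"
  unfolding matroid_rank_def by blast

lemma mr_sub: "matroid_rank E r \<Longrightarrow> A \<subseteq> E \<Longrightarrow> B \<subseteq> E \<Longrightarrow> r (A \<union> B) + r (A \<inter> B) \<le> r A + r B"
  unfolding matroid_rank_def by blast

lemma mr_empty: "matroid_rank E r \<Longrightarrow> r {} = 0"
  proof -
  assume "matroid_rank E r"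
  then have "\<forall>X. X \<subseteq> E \<longrightarrow> r X \<le> card X" unfolding matroid_rank_def by (elim conjE)
  then have "r {} \<le> card ({}::'a set)" by (erule_tac x="{}" in allE) simp
  then show ?thesis by simp
qed

lemma mcl_sub: "mcl E r A \<subseteq> E" unfolding mcl_def by auto

lemma mcl_incl: "A \<subseteq> E \<Longrightarrow> A \<subseteq> mcl E r A"
  unfolding mcl_def by (auto simp: insert_absorb)

lemma mcl_mono_el:
  assumes M: "matroid_rank E r" and AB: "A \<subseteq> B" "B \<subseteq> E" and e: "e \<in> mcl E r A"
  shows "e \<in> mcl E r B"
proof -
  have eE: "e \<in> E" and ea: "r (insert e A) = r A" using e unfolding mcl_def by simp_all
  have ieA: "insert e A \<subseteq> E" using eE AB by blast
  have s: "r (insert e A \<union> B) + r (insert e A \<inter> B) \<le> r (insert e A) + r B"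
    by (rule mr_sub[OF M ieA AB(2)])
  have i1: "A \<subseteq> insert e A \<inter> B" using AB by blast
  have i2: "insert e A \<inter> B \<subseteq> E" using AB by blast
  have a1: "r A \<le> r (insert e A \<inter> B)" by (rule mr_mono[OF M i1 i2])
  have a2: "insert e A \<union> B = insert e B" using AB by blast
  have "r (insert e B) + r (insert e A \<inter> B) \<le> r A + r B" using s ea a2 by simp
  then have le: "r (insert e B) \<le> r B" using a1 by linarith
  have i3: "B \<subseteq> insert e B" by blast
  have i4: "insert e B \<subseteq> E" using eE AB by blast
  have "r B \<le> r (insert e B)" by (rule mr_mono[OF M i3 i4])
  then have "r (insert e B) = r B" using le by simp
  then show ?thesis using eE unfolding mcl_def by simp
qed

lemma mcl_mono: "matroid_rank E r \<Longrightarrow> A \<subseteq> B \<Longrightarrow> B \<subseteq> E \<Longrightarrow> mcl E r A \<subseteq> mcl E r B"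
  using mcl_mono_el by (metis subsetI)

lemma mcl_rank_aux:
  assumes M: "matroid_rank E r" and X: "X \<subseteq> E" and S: "finite S" "S \<subseteq> mcl E r X"
  shows "r (X \<union> S) = r X"
  using S
proof (induction S rule: finite_induct)
  case empty then show ?case by simp
next
  case (insert e S)
  have S1: "S \<subseteq> mcl E r X" and eX: "e \<in> mcl E r X" using insert.prems by simp_all
  have IH: "r (X \<union> S) = r X" using insert.IH S1 by simp
  have "X \<union> S \<subseteq> E" using S1 X mcl_sub[of E r X] by blast
  then have "e \<in> mcl E r (X \<union> S)" using mcl_mono_el[OF M, of X "X \<union> S" e] eX by blast
  then have "r (insert e (X \<union> S)) = r (X \<union> S)" unfolding mcl_def by simp
  moreover have "X \<union> insert e S = insert e (X \<union> S)" by blast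
  ultimately show ?case using IH by simp
qed

lemma mcl_rank:
  assumes M: "matroid_rank E r" and X: "X \<subseteq> E"
  shows "r (mcl E r X) = r X"
proof -
  have fE: "finite E" using M unfolding matroid_rank_def by simp
  have f: "finite (mcl E r X)" by (rule finite_subset[OF mcl_sub fE])
  have "r (X \<union> mcl E r X) = r X" by (rule mcl_rank_aux[OF M X f subset_refl])
  moreover have "X \<union> mcl E r X = mcl E r X" using mcl_incl[OF X, of r] by blast
  ultimately show ?thesis by simp
qed

lemma mcl_idem:
  assumes M: "matroid_rank E r" and X: "X \<subseteq> E"
  shows "mcl E r (mcl E r X) = mcl E r X"
proof
  show "mcl E r X \<subseteq> mcl E r (mcl E r X)" by (rule mcl_incl[OF mcl_sub[of E r X]])
next
  show "mcl E r (mcl E r X) \<subseteq> mcl E r X"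
  proof
    fix e assume e: "e \<in> mcl E r (mcl E r X)"
    have eE: "e \<in> E" and h0: "r (insert e (mcl E r X)) = r (mcl E r X)"
      using e unfolding mcl_def[of E r "mcl E r X"] by simp_all
    have h: "r (insert e (mcl E r X)) = r X" using h0 mcl_rank[OF M X] by simp
    have j1: "insert e X \<subseteq> insert e (mcl E r X)" using mcl_incl[OF X, of r] by blast
    have j2: "insert e (mcl E r X) \<subseteq> E" using eE mcl_sub[of E r X] by blast
    have a: "r (insert e X) \<le> r (insert e (mcl E r X))" by (rule mr_mono[OF M j1 j2])
    have j3: "X \<subseteq> insert e X" by blast
    have j4: "insert e X \<subseteq> E" using eE X by blast
    have b: "r X \<le> r (insert e X)" by (rule mr_mono[OF M j3 j4])
    have "r (insert e X) = r X" using a b h by simp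
    then show "e \<in> mcl E r X" using eE unfolding mcl_def by simp
  qed
qed

theorem lemma4p2:
  fixes E :: "'a set" and r :: "'a set \<Rightarrow> nat" and X Y :: "'a set"
  assumes "matroid_rank E r"
    and "minimal_divider E r X Y"
  shows "mcl E r X \<inter> mcl E r Y = mcl E r X \<inter> mcl E r (Y - mcl E r X)"
proof -
  note M = assms(1)
  obtain k where ex: "exact_vertical_sep E r k X Y"
    and mn: "\<not> (\<exists>k' X' Y'. vertical_sep E r k' X' Y'
            \<and> mcl E r X' \<inter> mcl E r Y' \<subset> mcl E r X \<inter> mcl E r Y)"
    using assms(2) unfolding minimal_divider_def divider_def by blast
  have part: "X \<union> Y = E" "X \<inter> Y = {}"
    and eq: "int (r X) + int (r Y) - int (r E) = int k - 1"
    and mk: "min (r X) (r Y) \<ge> k"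
    using ex unfolding exact_vertical_sep_def vertical_sep_def by auto
  have XE: "X \<subseteq> E" and YE: "Y \<subseteq> E" using part by auto
  define X' where "X' = mcl E r X"
  define Y' where "Y' = Y - mcl E r X"
  have X'E: "X' \<subseteq> E" unfolding X'_def by (rule mcl_sub)
  have Y'E: "Y' \<subseteq> E" unfolding Y'_def using YE by auto
  have rX': "r X' = r X" unfolding X'_def using mcl_rank[OF M XE] .
  have rY': "r Y' \<le> r Y" using mr_mono[OF M, of Y' Y] YE unfolding Y'_def by auto
  have un: "X' \<union> Y' = E" unfolding X'_def Y'_def using mcl_incl[OF XE, of r] mcl_sub[of E r X] part by auto
  have dj: "X' \<inter> Y' = {}" unfolding X'_def Y'_def by auto
  have lam: "r E \<le> r X' + r Y'" using mr_sub[OF M X'E Y'E] un dj mr_empty[OF M] by simp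
  define k' where "k' = nat (int (r X') + int (r Y') - int (r E) + 1)"
  have k'eq: "int k' = int (r X') + int (r Y') - int (r E) + 1" unfolding k'_def using lam by simp
  have mX: "k \<le> r X" and mY: "k \<le> r Y" using mk by auto
  have i1: "int k' - 1 = int (r X') + int (r Y') - int (r E)" using k'eq by simp
  have "int k' \<le> int (r X')" using k'eq rX' rY' eq mX by linarith
  then have i2: "k' \<le> r X'" by simp
  have "int k' \<le> int (r Y')" using k'eq rX' eq mY by linarith
  then have i3: "k' \<le> r Y'" by simp
  have "vertical_sep E r k' X' Y'"
    unfolding vertical_sep_def using un dj i1 i2 i3 by simp
  then have nsub: "\<not> (mcl E r X' \<inter> mcl E r Y' \<subset> mcl E r X \<inter> mcl E r Y)" using mn by blast
  have cX': "mcl E r X' = mcl E r X" unfolding X'_def using mcl_idem[OF M XE] .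
  have sub: "mcl E r Y' \<subseteq> mcl E r Y" using mcl_mono[OF M, of Y' Y] YE unfolding Y'_def by auto
  have "mcl E r X \<inter> mcl E r Y' \<subseteq> mcl E r X \<inter> mcl E r Y" using sub by blast
  then have "mcl E r X \<inter> mcl E r Y' = mcl E r X \<inter> mcl E r Y" using nsub cX' by blast
  then show ?thesis unfolding Y'_def by simp
qed

end
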